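(* Let $n\ge3$, $\rho\in[0,1]$ and $\alpha\in[0,\tfrac{\pi}{2}]$. Then $$\int_{-1}^1 \frac{(1-x^2)^{\frac{n-3}{2}}}{(1+\rho^2-2\rho x \cos\alpha)^{\frac{n}{2}-1}}\, {}_2 F_1\Big(\tfrac{n-2}{4}, \tfrac{n}{4};\tfrac{n-1}{2}; \tfrac{4\rho^2 \sin^2\alpha\, (1-x^2)}{(1+\rho^2-2\rho x \cos\alpha)^2}\Big)\, dx=\int_{-1}^1 (1-x^2)^{\frac{n-3}{2}} (1-2\rho x + \rho^2)^{1-\frac{n}{2}}\, dx.$$
   Context: ${}_2F_1$ is the Gauss hypergeometric function. *)

theory Defs
  imports "HOL-Analysis.Analysis"
begin

text \<open>Gauss hypergeometric function as its power series
  sum over k of (a)_k (b)_k / ((c)_k k!) z^k (meaningful for abs z < 1).\<close>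
definition hyp2F1 :: "real \<Rightarrow> real \<Rightarrow> real \<Rightarrow> real \<Rightarrow> real" where
  "hyp2F1 a b c z =
     (\<Sum>k. pochhammer a k * pochhammer b k / (pochhammer c k * fact k) * z ^ k)"

end

theory Submission
  imports Defs
begin

lemma sq_powr:
  fixes r e :: real
  assumes "r > 0"
  shows "(r^2) powr e = r powr (2*e)"
proof -
  have e: "r^2 = r powr 2" using assms by simp
  show ?thesis unfolding e powr_powr ..
qed

lemma powr_add_nat:
  fixes r a :: real
  assumes "r > 0"
  shows "r powr (a + real m) = r powr a * r^m"
  using assms by (simp add: powr_add powr_realpow)

lemma shear_y:
  fixes f :: "real \<times> real \<Rightarrow> ennreal"
  assumes [measurable]: "f \<in> borel_measurable borel"
  shows "(\<integral>\<^sup>+z. f (fst z, snd z + a * fst z) \<partial>lborel) = (\<integral>\<^sup>+z. f z \<partial>lborel)"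
proof -
  have "(\<integral>\<^sup>+z. f (fst z, snd z + a * fst z) \<partial>lborel) =
        (\<integral>\<^sup>+z. f (fst z, snd z + a * fst z) \<partial>(lborel \<Otimes>\<^sub>M lborel))"
    by (simp add: lborel_prod)
  also have "\<dots> = (\<integral>\<^sup>+x. \<integral>\<^sup>+y. f (x, y + a * x) \<partial>lborel \<partial>lborel)"
    by (subst lborel.nn_integral_fst[symmetric]) auto
  also have "\<dots> = (\<integral>\<^sup>+x. \<integral>\<^sup>+y. f (x, y) \<partial>lborel \<partial>lborel)"
  proof (rule nn_integral_cong)
    fix x :: real
    show "(\<integral>\<^sup>+y. f (x, y + a * x) \<partial>lborel) = (\<integral>\<^sup>+y. f (x, y) \<partial>lborel)"
      using nn_integral_real_affine[of "\<lambda>y. f (x, y)" 1 "a * x"] by (simp add: add.commute)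
  qed
  also have "\<dots> = (\<integral>\<^sup>+z. f z \<partial>(lborel \<Otimes>\<^sub>M lborel))"
    by (subst lborel.nn_integral_fst[symmetric]) (auto simp: lborel_prod measurable_lborel1)
  also have "\<dots> = (\<integral>\<^sup>+z. f z \<partial>lborel)" by (simp add: lborel_prod)
  finally show ?thesis .
qed

lemma shear_x:
  fixes f :: "real \<times> real \<Rightarrow> ennreal"
  assumes [measurable]: "f \<in> borel_measurable borel"
  shows "(\<integral>\<^sup>+z. f (fst z + a * snd z, snd z) \<partial>lborel) = (\<integral>\<^sup>+z. f z \<partial>lborel)"
proof -
  have "(\<integral>\<^sup>+z. f (fst z + a * snd z, snd z) \<partial>lborel) =
        (\<integral>\<^sup>+z. f (fst z + a * snd z, snd z) \<partial>(lborel \<Otimes>\<^sub>M lborel))"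
    by (simp add: lborel_prod)
  also have "\<dots> = (\<integral>\<^sup>+y. \<integral>\<^sup>+x. f (x + a * y, y) \<partial>lborel \<partial>lborel)"
    by (subst lborel_pair.nn_integral_snd[symmetric]) auto
  also have "\<dots> = (\<integral>\<^sup>+y. \<integral>\<^sup>+x. f (x, y) \<partial>lborel \<partial>lborel)"
  proof (rule nn_integral_cong)
    fix y :: real
    show "(\<integral>\<^sup>+x. f (x + a * y, y) \<partial>lborel) = (\<integral>\<^sup>+x. f (x, y) \<partial>lborel)"
      using nn_integral_real_affine[of "\<lambda>x. f (x, y)" 1 "a * y"] by (simp add: add.commute)
  qed
  also have "\<dots> = (\<integral>\<^sup>+z. f z \<partial>(lborel \<Otimes>\<^sub>M lborel))"
    by (subst lborel_pair.nn_integral_snd[symmetric]) (auto simp: lborel_prod measurable_lborel1)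
  also have "\<dots> = (\<integral>\<^sup>+z. f z \<partial>lborel)" by (simp add: lborel_prod)
  finally show ?thesis .
qed

lemma rotation_inv:
  fixes f :: "real \<times> real \<Rightarrow> ennreal" and c s :: real
  assumes [measurable]: "f \<in> borel_measurable borel"
  assumes cs: "c^2 + s^2 = 1" and c: "c > -1"
  shows "(\<integral>\<^sup>+z. f (c * fst z - s * snd z, s * fst z + c * snd z) \<partial>lborel) = (\<integral>\<^sup>+z. f z \<partial>lborel)"
proof -
  define u where "u = s / (1 + c)"
  define h1 where "h1 w = f (fst w + (- u) * snd w, snd w)" for w
  define h2 where "h2 w = h1 (fst w, snd w + s * fst w)" for w
  have f'[measurable]: "f \<in> borel_measurable (borel \<Otimes>\<^sub>M borel)" by (simp add: borel_prod)
  have [measurable]: "h1 \<in> borel_measurable (borel \<Otimes>\<^sub>M borel)" unfolding h1_def by measurable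
  have [measurable]: "h2 \<in> borel_measurable (borel \<Otimes>\<^sub>M borel)" unfolding h2_def by measurable
  have [measurable]: "h1 \<in> borel_measurable borel" "h2 \<in> borel_measurable borel"
    by (simp_all only: borel_prod[symmetric]) measurable
  have e1: "1 - u * s = c" using cs c unfolding u_def
    by (simp add: field_simps power2_eq_square)
  have e2: "2 * u - s * u * u = s"
  proof -
    have "2 * u - s * u * u = u * (1 + (1 - u * s))" by (simp add: algebra_simps)
    also have "\<dots> = u * (1 + c)" using e1 by simp
    also have "\<dots> = s" using c unfolding u_def by simp
    finally show ?thesis .
  qed
  have pt: "f (c * fst z - s * snd z, s * fst z + c * snd z) = h2 (fst z + (- u) * snd z, snd z)" for z
  proof -
    obtain x y where z: "z = (x, y)" by (cases z)
    have "x + - u * y + - u * (y + s * (x + - u * y)) = c * x - s * y"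
    proof -
      have "x + - u * y + - u * (y + s * (x + - u * y)) = x * (1 - u * s) - y * (2 * u - s * u * u)"
        by (simp add: algebra_simps)
      then show ?thesis using e1 e2 by (simp add: mult.commute)
    qed
    moreover have "y + s * (x + - u * y) = s * x + c * y"
    proof -
      have "y + s * (x + - u * y) = s * x + y * (1 - u * s)"
        by (simp add: algebra_simps)
      then show ?thesis using e1 by (simp add: mult.commute)
    qed
    ultimately show ?thesis unfolding z h2_def h1_def by simp
  qed
  have "(\<integral>\<^sup>+z. f (c * fst z - s * snd z, s * fst z + c * snd z) \<partial>lborel) =
        (\<integral>\<^sup>+z. h2 (fst z + (- u) * snd z, snd z) \<partial>lborel)" by (simp add: pt)
  also have "\<dots> = (\<integral>\<^sup>+z. h2 z \<partial>lborel)" by (rule shear_x) measurable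
  also have "\<dots> = (\<integral>\<^sup>+z. h1 z \<partial>lborel)" unfolding h2_def by (rule shear_y) measurable
  also have "\<dots> = (\<integral>\<^sup>+z. f z \<partial>lborel)" unfolding h1_def by (rule shear_x) measurable
  finally show ?thesis .
qed


lemma powr_sq_aux:
  fixes u :: real and k :: nat
  assumes u: "u > 0"
  shows "(u^2) powr (real k + 1/2 - 1) * (2 * u) = 2 * u^(2*k)"
proof -
  have "(u^2) powr (real k + 1/2 - 1) * u = u powr (2 * (real k + 1/2 - 1)) * u powr 1"
    using u by (simp add: sq_powr)
  also have "\<dots> = u powr (2 * (real k + 1/2 - 1) + 1)" by (simp only: powr_add)
  also have "2 * (real k + 1/2 - 1) + 1 = 0 + real (2*k)" by simp
  also have "u powr (0 + real (2*k)) = u^(2*k)" using powr_add_nat[OF u, of 0 "2*k"] u by simp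
  finally show ?thesis by (simp add: mult_ac)
qed

lemma beta_J:
  fixes e :: real and k :: nat
  assumes e: "e > -1"
  shows "(\<integral>\<^sup>+u. ennreal (indicator {-1<..<1} u * ((1 - u^2) powr e * u^(2*k))) \<partial>lborel)
         = ennreal (Beta (real k + 1/2) (e + 1))"
proof -
  define h where "h u = (1 - u^2) powr e * u^(2*k)" for u :: real
  have h_nn: "h u \<ge> 0" for u unfolding h_def by simp
  have h_even: "h (-u) = h u" for u unfolding h_def by simp
  have [measurable]: "h \<in> borel_measurable borel" unfolding h_def by measurable
  define F where "F t = t powr (real k + 1/2 - 1) * (1 - t) powr (e + 1 - 1)" for t :: real
  have [measurable]: "F \<in> borel_measurable borel" unfolding F_def by measurable
  have hasB: "(F has_integral Beta (real k + 1/2) (e + 1)) {0..1}"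
    unfolding F_def by (rule has_integral_Beta_real) (use e in auto)
  have IB: "(\<integral>\<^sup>+t. ennreal (indicator {0..1} t * F t) \<partial>lborel) = ennreal (Beta (real k + 1/2) (e + 1))"
    by (rule nn_integral_has_integral_lebesgue[OF _ hasB]) (auto simp: F_def)
  have sub: "(\<integral>\<^sup>+t. ennreal (F t * indicator {(\<lambda>x. x^2) 0..(\<lambda>x. x^2) 1} t) \<partial>lborel) =
        (\<integral>\<^sup>+u. ennreal (F ((\<lambda>x. x^2) u) * (2 * u) * indicator {0..1} u) \<partial>lborel)"
    apply (rule nn_integral_substitution)
    apply (simp add: set_borel_measurable_def)
    apply (rule derivative_eq_intros | simp)+
    done
  have "(\<integral>\<^sup>+u. ennreal (F ((\<lambda>x. x^2) u) * (2 * u) * indicator {0..1} u) \<partial>lborel) =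
        (\<integral>\<^sup>+u. 2 * ennreal (indicator {0..1} u * h u) \<partial>lborel)"
  proof (rule nn_integral_cong_AE)
    show "AE u in lborel. ennreal (F ((\<lambda>x. x^2) u) * (2 * u) * indicator {0..1} u) = 2 * ennreal (indicator {0..1} u * h u)"
      using AE_lborel_singleton[of 0]
    proof eventually_elim
      case (elim u)
      show ?case
      proof (cases "u \<in> {0..1}")
        case True
        then have "u > 0" using elim by auto
        have "F (u^2) * (2 * u) = 2 * h u"
          using powr_sq_aux[OF \<open>u > 0\<close>, of k] by (simp add: F_def h_def algebra_simps)
        then have eq: "F (u^2) * (2 * u) * indicator {0..1} u = 2 * (indicator {0..1} u * h u)"
          using True by simp
        show ?thesis unfolding eq using ennreal_mult'[of 2 "indicator {0..1} u * h u"] by simp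
      qed simp
    qed
  qed
  also have "\<dots> = 2 * (\<integral>\<^sup>+u. ennreal (indicator {0..1} u * h u) \<partial>lborel)"
    by (rule nn_integral_cmult) measurable
  finally have half: "2 * (\<integral>\<^sup>+u. ennreal (indicator {0..1} u * h u) \<partial>lborel) = ennreal (Beta (real k + 1/2) (e + 1))"
    using sub IB by (simp add: mult.commute)
  define I0 where "I0 = (\<integral>\<^sup>+u. ennreal (indicator {0..1} u * h u) \<partial>lborel)"
  have s1: "(\<integral>\<^sup>+u. ennreal (indicator {-1<..<1} u * h u) \<partial>lborel) =
        (\<integral>\<^sup>+u. ennreal (indicator {-1<..0} u * h u) + ennreal (indicator {0<..<1} u * h u) \<partial>lborel)"
    by (rule nn_integral_cong) (auto simp: indicator_def h_nn)
  have s2: "(\<integral>\<^sup>+u. ennreal (indicator {-1<..0} u * h u) + ennreal (indicator {0<..<1} u * h u) \<partial>lborel) =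
     (\<integral>\<^sup>+u. ennreal (indicator {-1<..0} u * h u) \<partial>lborel) + (\<integral>\<^sup>+u. ennreal (indicator {0<..<1} u * h u) \<partial>lborel)"
    by (rule nn_integral_add) auto
  have s3: "(\<integral>\<^sup>+u. ennreal (indicator {-1<..0} u * h u) \<partial>lborel) = (\<integral>\<^sup>+u. ennreal (indicator {-1<..0} (0 + (-1) * u) * h (0 + (-1) * u)) \<partial>lborel)"
    using nn_integral_real_affine[of "\<lambda>u. ennreal (indicator {-1<..0} u * h u)" "-1" 0] by simp
  have s4: "(\<integral>\<^sup>+u. ennreal (indicator {-1<..0} (0 + (-1) * u) * h (0 + (-1) * u)) \<partial>lborel) = I0"
    unfolding I0_def
  proof (rule nn_integral_cong_AE)
    show "AE u in lborel. ennreal (indicator {-1<..0} (0 + (-1) * u) * h (0 + (-1) * u)) = ennreal (indicator {0..1} u * h u)"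
      using AE_lborel_singleton[of 1] by eventually_elim (auto simp: indicator_def h_even)
  qed
  have s5: "(\<integral>\<^sup>+u. ennreal (indicator {0<..<1} u * h u) \<partial>lborel) = I0"
    unfolding I0_def
  proof (rule nn_integral_cong_AE)
    show "AE u in lborel. ennreal (indicator {0<..<1} u * h u) = ennreal (indicator {0..1} u * h u)"
      using AE_lborel_singleton[of 1] AE_lborel_singleton[of 0] by eventually_elim (auto simp: indicator_def)
  qed
  have "(\<integral>\<^sup>+u. ennreal (indicator {-1<..<1} u * h u) \<partial>lborel) = 2 * I0"
    using s1 s2 s3 s4 s5 by (simp add: mult_2)
  then show ?thesis using half unfolding h_def I0_def by simp
qed

lemma beta_scaled:
  fixes e r :: real and k :: nat
  assumes e: "e > -1" and r: "r > 0"
  shows "(\<integral>\<^sup>+Y. ennreal (indicator {-r<..<r} Y * ((r^2 - Y^2) powr e * Y^(2*k))) \<partial>lborel)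
         = ennreal (r powr (2*e + 2*k + 1) * Beta (real k + 1/2) (e + 1))"
proof -
  define f where "f Y = ennreal (indicator {-r<..<r} Y * ((r^2 - Y^2) powr e * Y^(2*k)))" for Y
  have [measurable]: "f \<in> borel_measurable borel" unfolding f_def by measurable
  have "(\<integral>\<^sup>+Y. f Y \<partial>lborel) = ennreal \<bar>r\<bar> * (\<integral>\<^sup>+u. f (0 + r * u) \<partial>lborel)"
    by (rule nn_integral_real_affine) (use r in auto)
  also have "(\<integral>\<^sup>+u. f (0 + r * u) \<partial>lborel) =
      (\<integral>\<^sup>+u. ennreal (r powr (2*e + 2*k)) * ennreal (indicator {-1<..<1} u * ((1 - u^2) powr e * u^(2*k))) \<partial>lborel)"
  proof (rule nn_integral_cong)
    fix u :: real
    show "f (0 + r * u) = ennreal (r powr (2*e + 2*k)) * ennreal (indicator {-1<..<1} u * ((1 - u^2) powr e * u^(2*k)))"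
    proof (cases "u \<in> {-1<..<1}")
      case True
      then have "r * u \<in> {-r<..<r}"
        using mult_strict_left_mono[of "-1" u r] mult_strict_left_mono[of u 1 r] r by auto
      have u2: "1 - u^2 \<ge> 0" using True by (auto simp: abs_square_le_1 less_imp_le abs_le_iff)
      have "(r^2 - (r*u)^2) powr e = (r^2) powr e * (1 - u^2) powr e"
        using u2 by (simp add: powr_mult[symmetric] algebra_simps power_mult_distrib)
      also have "(r^2) powr e = r powr (2*e)" using r by (rule sq_powr)
      finally have 0: "(r^2 - (r*u)^2) powr e = r powr (2*e) * (1 - u^2) powr e" .
      have P: "r powr (2*e + 2*k) = r powr (2*e) * r^(2*k)" using powr_add_nat[OF r, of "2*e" "2*k"] by simp
      have 1: "(r^2 - (r*u)^2) powr e * (r*u)^(2*k) = (r powr (2*e + 2*k)) * ((1 - u^2) powr e * u^(2*k))"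
        unfolding 0 P by (simp only: power_mult_distrib mult_ac)
      show ?thesis unfolding f_def using True \<open>r * u \<in> _\<close> 1
        by (simp add: ennreal_mult'[symmetric])
    next
      case False
      then have uu: "u \<le> -1 \<or> 1 \<le> u" by auto
      have "r * u \<le> -r \<or> r \<le> r * u"
      proof (cases "u \<le> -1")
        case True
        then show ?thesis using mult_left_mono[OF True, of r] r by simp
      next
        case False
        then have "1 \<le> u" using uu by simp
        then show ?thesis using mult_left_mono[of 1 u r] r by simp
      qed
      then have "r * u \<notin> {-r<..<r}" by auto
      then show ?thesis using False unfolding f_def by simp
    qed
  qed
  also have "\<dots> = ennreal (r powr (2*e + 2*k)) * ennreal (Beta (real k + 1/2) (e + 1))"
    by (subst nn_integral_cmult) (auto simp: beta_J[OF e])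
  finally have X: "(\<integral>\<^sup>+Y. f Y \<partial>lborel) = ennreal \<bar>r\<bar> * (ennreal (r powr (2*e + 2*k)) * ennreal (Beta (real k + 1/2) (e + 1)))" .
  define P where "P = r powr (2*e + 2*k)"
  define B where "B = Beta (real k + 1/2) (e + 1)"
  have "ennreal (r * (P * B)) = ennreal r * ennreal (P * B)" by (rule ennreal_mult') (use r in simp)
  also have "ennreal (P * B) = ennreal P * ennreal B" by (rule ennreal_mult') (simp add: P_def)
  finally have Y: "ennreal \<bar>r\<bar> * (ennreal P * ennreal B) = ennreal (r * (P * B))" using r by simp
  have Z: "r * (P * B) = r powr (2*e + 2*k + 1) * B" unfolding P_def using r by (simp add: powr_add)
  have "(\<integral>\<^sup>+Y. f Y \<partial>lborel) = ennreal (r powr (2*e + 2*k + 1) * B)"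
    unfolding X[folded P_def B_def] Y Z ..
  then show ?thesis unfolding f_def B_def .
qed

lemma poch_id:
  fixes v :: real and k :: nat
  shows "pochhammer v (2*k) / fact (2*k) * pochhammer (1/2) k
         = pochhammer (v/2) k * pochhammer ((v+1)/2) k / fact k"
proof -
  have a: "pochhammer v (2*k) = 2^(2*k) * pochhammer (v/2) k * pochhammer ((v+1)/2) k"
    using pochhammer_double[of "v/2" k] by (simp add: add_divide_distrib)
  have b: "(fact (2*k) :: real) = 2^(2*k) * pochhammer (1/2) k * fact k"
    using pochhammer_double[of "1/2::real" k] by (simp add: pochhammer_fact)
  have "pochhammer (1/2::real) k > 0" by (rule pochhammer_pos) simp
  then show ?thesis unfolding a b by simp
qed

lemma field_aux: fixes a b c x y :: real
  assumes "x \<noteq> 0" "y \<noteq> 0" "c \<noteq> 0"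
  shows "a * b / c = (x * b / y) * (a / x) / (c / y)"
  using assms by (simp add: field_simps)
lemma beta_poch:
  fixes v :: real and k :: nat
  assumes v: "v > 0"
  shows "Beta (real k + 1/2) v = Beta (1/2) v * pochhammer (1/2) k / pochhammer (v + 1/2) k"
proof -
  have p1: "pochhammer (1/2::real) k = Gamma (1/2 + k) / Gamma (1/2)"
    by (rule pochhammer_Gamma) (use nonpos_Ints_nonpos[of "1/2::real"] in auto)
  have p2: "pochhammer (v + 1/2) k = Gamma (v + 1/2 + k) / Gamma (v + 1/2)"
    by (rule pochhammer_Gamma) (use v nonpos_Ints_nonpos[of "v + 1/2"] in auto)
  have g1: "Gamma (1/2::real) \<noteq> 0" "Gamma (v + 1/2) \<noteq> 0" "Gamma (v + 1/2 + k) \<noteq> 0"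
    using v by (auto intro!: Gamma_real_pos[THEN less_imp_neq, symmetric])
  have e1: "real k + 1/2 + v = v + 1/2 + k" "1/2 + v = v + 1/2" "real k + 1/2 = 1/2 + k" by simp_all
  show ?thesis unfolding Beta_def p1 p2 e1(1) unfolding e1(2) unfolding e1(3)
    by (rule field_aux) (use g1 in auto)
qed

lemma hyp_summable:
  fixes a b c z :: real
  assumes a: "a > 0" and b: "b > 0" and c: "c > 0" and abc: "a + b = c" and z: "0 \<le> z" "z < 1"
  shows "summable (\<lambda>k. pochhammer a k * pochhammer b k / (pochhammer c k * fact k) * z^k)"
proof (rule summable_ratio_test[where c = z and N = "nat \<lceil>a * b\<rceil>"])
  show "z < 1" by fact
  fix k :: nat assume k: "k \<ge> nat \<lceil>a * b\<rceil>"
  then have kab: "real k \<ge> a * b" by linarith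
  define P where "P = pochhammer a k * pochhammer b k / (pochhammer c k * fact k)"
  have P0: "P \<ge> 0" unfolding P_def using a b c by (auto intro!: mult_nonneg_nonneg divide_nonneg_nonneg pochhammer_nonneg)
  have cpos: "pochhammer c k * fact k > 0" using c by (intro mult_pos_pos pochhammer_pos) auto
  have "pochhammer a (Suc k) * pochhammer b (Suc k) / (pochhammer c (Suc k) * fact (Suc k))
        = P * ((a + k) * (b + k) / ((c + k) * (k + 1)))"
    unfolding P_def pochhammer_Suc fact_Suc by (simp add: field_simps)
  also have "\<dots> \<le> P * 1"
  proof -
    have "(a + k) * (b + k) = k * k + (a + b) * k + a * b" by (simp add: algebra_simps)
    also have "\<dots> = k * k + c * k + a * b" using abc by simp
    also have "\<dots> \<le> (c + k) * (k + 1)" using kab c by (simp add: algebra_simps)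
    finally have "(a + k) * (b + k) / ((c + k) * (k + 1)) \<le> 1"
      using c by (simp add: divide_le_eq_1)
    then show ?thesis using P0 by (intro mult_left_mono) auto
  qed
  finally have le: "pochhammer a (Suc k) * pochhammer b (Suc k) / (pochhammer c (Suc k) * fact (Suc k)) \<le> P" by simp
  have nn: "pochhammer a (Suc k) * pochhammer b (Suc k) / (pochhammer c (Suc k) * fact (Suc k)) \<ge> 0"
    using a b c by (auto intro!: mult_nonneg_nonneg divide_nonneg_nonneg pochhammer_nonneg)
  define Q where "Q = pochhammer a (Suc k) * pochhammer b (Suc k) / (pochhammer c (Suc k) * fact (Suc k)) * z^(Suc k)"
  have Qle: "Q \<le> P * z^(Suc k)" unfolding Q_def using le z by (intro mult_right_mono) auto
  have Q0: "Q \<ge> 0" unfolding Q_def using nn z by (intro mult_nonneg_nonneg) auto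
  have "norm Q \<le> z * norm (P * z^k)"
    using Qle Q0 P0 z by (simp add: abs_mult mult_ac)
  then show "norm (pochhammer a (Suc k) * pochhammer b (Suc k) / (pochhammer c (Suc k) * fact (Suc k)) * z^(Suc k))
       \<le> z * norm (pochhammer a k * pochhammer b k / (pochhammer c k * fact k) * z^k)"
    unfolding Q_def P_def .
qed

lemma gb:
  fixes v A y c :: real and n :: nat
  assumes Apos: "A > 0"
  shows "((-v) gchoose n) * A powr (-v - real n) * (c * y)^n = (- c)^n * (pochhammer v n / fact n * A powr (-v) * (y / A)^n)"
proof -
  have 1: "A powr (-v - real n) = A powr (-v) / A^n" using Apos by (simp add: powr_diff powr_realpow)
  have 2: "((-v) gchoose n) = (-1)^n * pochhammer v n / fact n" by (simp add: gbinomial_pochhammer)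
  have 3: "(- c)^n = (-1)^n * c^n" by (rule power_minus)
  show ?thesis unfolding 1 2 3 power_mult_distrib power_divide by (simp add: mult_ac)
qed

lemma even_binomial:
  fixes v A y :: real
  assumes A: "\<bar>y\<bar> < A"
  shows "(\<lambda>k. pochhammer v (2*k) / fact (2*k) * A powr (-v) * (y / A)^(2*k)) sums
           (((A - y) powr (-v) + (A + y) powr (-v)) / 2)"
proof -
  have Apos: "A > 0" using A by linarith
  define b where "b n = pochhammer v n / fact n * A powr (-v) * (y / A)^n" for n
  have gb: "((-v) gchoose n) * A powr (-v - real n) * (c * y)^n = (- c)^n * b n" for n c
    unfolding b_def by (rule gb[OF Apos])
  have s1: "(\<lambda>n. b n) sums ((A - y) powr (-v))"
  proof -
    have "\<bar>-y\<bar> < A" using A by simp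
    from gen_binomial_real''[OF this, of "-v"]
    have "(\<lambda>n. ((-v) gchoose n) * A powr (-v - real n) * ((-1) * y)^n) sums ((A + - y) powr (-v))" by simp
    then show ?thesis using gb[of _ "-1"] by simp
  qed
  have s2: "(\<lambda>n. (-1)^n * b n) sums ((A + y) powr (-v))"
  proof -
    from gen_binomial_real''[OF A, of "-v"]
    have "(\<lambda>n. ((-v) gchoose n) * A powr (-v - real n) * (1 * y)^n) sums ((A + y) powr (-v))" by simp
    then show ?thesis using gb[of _ 1] by simp
  qed
  have s3: "(\<lambda>n. (b n + (-1)^n * b n) / 2) sums (((A - y) powr (-v) + (A + y) powr (-v)) / 2)"
    by (intro sums_divide sums_add s1 s2)
  have eq: "(b n + (-1)^n * b n) / 2 = (if even n then b n else 0)" for n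
    by (cases "even n") auto
  have s4: "(\<lambda>n. if even n then b n else 0) sums (((A - y) powr (-v) + (A + y) powr (-v)) / 2)"
    using s3 unfolding eq .
  have "(\<lambda>k. (\<lambda>n. if even n then b n else 0) (2 * k)) sums (((A - y) powr (-v) + (A + y) powr (-v)) / 2)"
    by (subst sums_mono_reindex) (auto simp: strict_mono_def intro: s4 elim!: oddE)
  then show ?thesis by (simp add: b_def)
qed

lemma fiber:
  fixes v s A r :: real
  assumes v: "v > 0" and r: "r > 0" and s: "s \<ge> 0" and A: "2 * s * r < A"
  shows "(\<integral>\<^sup>+Y. ennreal (indicator {-r<..<r} Y * ((r^2 - Y^2) powr (v - 1) * (A - 2 * s * Y) powr (-v))) \<partial>lborel)
     = ennreal (Beta (1/2) v * ((r^2) powr (v - 1/2) * A powr (-v) * hyp2F1 (v/2) ((v+1)/2) (v+1/2) (4 * s^2*r^2/A^2)))"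
proof -
  have "0 \<le> 2 * s * r" using s r by simp
  then have Apos: "A > 0" using A by linarith
  define G where "G Y = indicator {-r<..<r} Y * ((r^2 - Y^2) powr (v - 1) * (A - 2 * s * Y) powr (-v))" for Y
  define H where "H Y = indicator {-r<..<r} Y * ((r^2 - Y^2) powr (v - 1) * (((A - 2 * s * Y) powr (-v) + (A + 2 * s * Y) powr (-v)) / 2))" for Y
  have G_nn: "G Y \<ge> 0" for Y unfolding G_def by simp
  have [measurable]: "G \<in> borel_measurable borel" unfolding G_def by measurable
  have HG: "H Y = G Y / 2 + G (-Y) / 2" for Y
  proof (cases "Y \<in> {-r<..<r}")
    case True
    then have "-Y \<in> {-r<..<r}" by auto
    with True show ?thesis unfolding H_def G_def by (simp add: add_divide_distrib distrib_left)
  next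
    case False
    then have "-Y \<notin> {-r<..<r}" by auto
    with False show ?thesis unfolding H_def G_def by simp
  qed
  define IG where "IG = (\<integral>\<^sup>+Y. ennreal (G Y) \<partial>lborel)"
  have refl: "(\<integral>\<^sup>+Y. ennreal (G (-Y)) \<partial>lborel) = IG"
    unfolding IG_def using nn_integral_real_affine[of "\<lambda>Y. ennreal (G Y)" "-1" 0] by simp
  define h where "h = ennreal (1/2)"
  have half: "ennreal (x / 2) = h * ennreal x" for x :: real
    unfolding h_def by (subst ennreal_mult'[symmetric]) simp_all
  have h2: "h * 2 = 1" unfolding h_def
    by (subst ennreal_numeral[symmetric], subst ennreal_mult'[symmetric]) simp_all
  have step1: "(\<integral>\<^sup>+Y. ennreal (H Y) \<partial>lborel) = IG"
  proof -
    have "(\<integral>\<^sup>+Y. ennreal (H Y) \<partial>lborel) = (\<integral>\<^sup>+Y. h * ennreal (G Y) + h * ennreal (G (-Y)) \<partial>lborel)"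
    proof (rule nn_integral_cong)
      fix Y
      have "ennreal (H Y) = ennreal (G Y / 2) + ennreal (G (-Y) / 2)"
        unfolding HG using G_nn[of Y] G_nn[of "-Y"] by (intro ennreal_plus) auto
      then show "ennreal (H Y) = h * ennreal (G Y) + h * ennreal (G (-Y))" by (simp only: half)
    qed
    also have "\<dots> = (\<integral>\<^sup>+Y. h * ennreal (G Y) \<partial>lborel) + (\<integral>\<^sup>+Y. h * ennreal (G (-Y)) \<partial>lborel)"
      by (rule nn_integral_add) auto
    also have "\<dots> = h * IG + h * IG"
      using refl unfolding IG_def by (simp add: nn_integral_cmult)
    also have "\<dots> = (h * 2) * IG" by (simp add: mult_2 distrib_left mult.assoc)
    finally show ?thesis by (simp add: h2)
  qed
  define T where "T k Y = indicator {-r<..<r} Y * ((r^2 - Y^2) powr (v - 1) * (pochhammer v (2*k) / fact (2*k) * A powr (-v) * ((2 * s * Y) / A)^(2*k)))" for k Y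
  have T_nn: "T k Y \<ge> 0" for k Y
  proof -
    have "((2 * s * Y) / A)^(2*k) \<ge> 0" by (simp add: power_mult)
    then show ?thesis unfolding T_def using v
      by (intro mult_nonneg_nonneg divide_nonneg_nonneg pochhammer_nonneg) auto
  qed
  have [measurable]: "T k \<in> borel_measurable borel" for k unfolding T_def by measurable
  have T_sums: "(\<lambda>k. T k Y) sums H Y" for Y
  proof (cases "Y \<in> {-r<..<r}")
    case True
    have "\<bar>2 * s * Y\<bar> \<le> 2 * s * r" using True s by (auto simp: abs_mult intro!: mult_left_mono)
    then have "\<bar>2 * s * Y\<bar> < A" using A by linarith
    from sums_mult[OF even_binomial[OF this, of v], of "indicator {-r<..<r} Y * (r^2 - Y^2) powr (v - 1)"]
    show ?thesis unfolding T_def H_def by (simp add: mult.assoc)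
  next
    case False
    then show ?thesis unfolding T_def H_def by simp
  qed
  have step3: "(\<integral>\<^sup>+Y. ennreal (H Y) \<partial>lborel) = (\<Sum>k. \<integral>\<^sup>+Y. ennreal (T k Y) \<partial>lborel)"
  proof -
    have "(\<integral>\<^sup>+Y. ennreal (H Y) \<partial>lborel) = (\<integral>\<^sup>+Y. (\<Sum>k. ennreal (T k Y)) \<partial>lborel)"
    proof (rule nn_integral_cong)
      fix Y
      show "ennreal (H Y) = (\<Sum>k. ennreal (T k Y))"
        using suminf_ennreal2[of "\<lambda>k. T k Y", OF T_nn sums_summable[OF T_sums]] sums_unique[OF T_sums[of Y]]
        by simp
    qed
    also have "\<dots> = (\<Sum>k. \<integral>\<^sup>+Y. ennreal (T k Y) \<partial>lborel)"
      by (rule nn_integral_suminf) measurable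
    finally show ?thesis .
  qed
  define K where "K = Beta (1/2) v"
  define z where "z = 4 * s^2*r^2/A^2"
  define ht where "ht k = pochhammer (v/2) k * pochhammer ((v+1)/2) k / (pochhammer (v+1/2) k * fact k) * z^k" for k
  define C where "C = K * ((r^2) powr (v - 1/2) * A powr (-v))"
  have C_nn: "C \<ge> 0" unfolding C_def K_def Beta_def using v by (auto intro!: mult_nonneg_nonneg divide_nonneg_nonneg Gamma_real_pos less_imp_le)
  have ht_nn: "ht k \<ge> 0" for k unfolding ht_def z_def using v
    by (auto intro!: mult_nonneg_nonneg divide_nonneg_nonneg pochhammer_nonneg)
  have step4: "(\<integral>\<^sup>+Y. ennreal (T k Y) \<partial>lborel) = ennreal (C * ht k)" for k
  proof -
    define c where "c = pochhammer v (2*k) / fact (2*k) * A powr (-v) * (2* s /A)^(2*k)"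
    have c_nn: "c \<ge> 0" unfolding c_def using v
      by (intro mult_nonneg_nonneg divide_nonneg_nonneg pochhammer_nonneg) (auto simp: power_mult)
    have "(\<integral>\<^sup>+Y. ennreal (T k Y) \<partial>lborel) = (\<integral>\<^sup>+Y. ennreal c * ennreal (indicator {-r<..<r} Y * ((r^2 - Y^2) powr (v - 1) * Y^(2*k))) \<partial>lborel)"
    proof (rule nn_integral_cong)
      fix Y
      have "T k Y = c * (indicator {-r<..<r} Y * ((r^2 - Y^2) powr (v - 1) * Y^(2*k)))"
        unfolding T_def c_def by (simp add: power_mult_distrib power_divide mult_ac)
      then show "ennreal (T k Y) = ennreal c * ennreal (indicator {-r<..<r} Y * ((r^2 - Y^2) powr (v - 1) * Y^(2*k)))"
        using c_nn by (simp add: ennreal_mult')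
    qed
    also have "\<dots> = ennreal c * (\<integral>\<^sup>+Y. ennreal (indicator {-r<..<r} Y * ((r^2 - Y^2) powr (v - 1) * Y^(2*k))) \<partial>lborel)"
      by (rule nn_integral_cmult) measurable
    also have "\<dots> = ennreal c * ennreal (r powr (2*(v - 1) + 2*k + 1) * Beta (real k + 1/2) (v - 1 + 1))"
      using beta_scaled[of "v - 1" r k] v r by simp
    also have "\<dots> = ennreal (c * (r powr (2*(v - 1) + 2*k + 1) * Beta (real k + 1/2) (v - 1 + 1)))"
      using c_nn by (simp add: ennreal_mult')
    also have "c * (r powr (2*(v - 1) + 2*k + 1) * Beta (real k + 1/2) (v - 1 + 1)) = C * ht k"
    proof -
      have B: "Beta (real k + 1/2) (v - 1 + 1) = K * pochhammer (1/2) k / pochhammer (v + 1/2) k"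
        using beta_poch[OF v, of k] unfolding K_def by simp
      have R: "r powr (2*(v - 1) + 2*k + 1) = (r^2) powr (v - 1/2) * r^(2*k)"
      proof -
        have eq: "2*(v - 1) + 2*k + 1 = 2*(v - 1/2) + real (2*k)" by simp
        show ?thesis unfolding eq powr_add_nat[OF r] sq_powr[OF r] ..
      qed
      have Z: "(2* s /A)^(2*k) * r^(2*k) = z^k"
      proof -
        have "(2* s /A)^(2*k) * r^(2*k) = (2* s /A * r)^(2*k)" by (simp only: power_mult_distrib)
        also have "\<dots> = ((2* s /A * r)^2)^k" by (simp only: power_mult)
        also have "(2* s /A * r)^2 = z" unfolding z_def by (simp add: power_mult_distrib power_divide)
        finally show ?thesis .
      qed
      have PI: "pochhammer v (2*k) / fact (2*k) * pochhammer (1/2) k = pochhammer (v/2) k * pochhammer ((v+1)/2) k / fact k"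
        by (rule poch_id)
      have "c * (r powr (2*(v - 1) + 2*k + 1) * Beta (real k + 1/2) (v - 1 + 1))
          = K * ((r^2) powr (v - 1/2) * A powr (-v)) * ((pochhammer v (2*k) / fact (2*k) * pochhammer (1/2) k) / pochhammer (v + 1/2) k * ((2* s /A)^(2*k) * r^(2*k)))"
        unfolding c_def B R by (simp add: mult_ac)
      also have "\<dots> = C * ht k" unfolding PI Z C_def ht_def by (simp add: mult_ac)
      finally show ?thesis .
    qed
    finally show ?thesis .
  qed
  have z01: "0 \<le> z" "z < 1"
  proof -
    have "z = (2 * s * r/A)^2" unfolding z_def by (simp add: power_mult_distrib power_divide)
    moreover have "0 \<le> 2 * s * r/A" "2 * s * r/A < 1" using s r Apos A by auto
    ultimately show "0 \<le> z" "z < 1" by (auto simp: power_less_one_iff abs_square_less_1)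
  qed
  have hs: "summable ht" unfolding ht_def
    by (rule hyp_summable) (use v z01 in \<open>auto simp: field_simps\<close>)
  have "(\<Sum>k. ennreal (C * ht k)) = ennreal (\<Sum>k. C * ht k)"
    by (rule suminf_ennreal2) (use C_nn ht_nn hs in \<open>auto intro: summable_mult\<close>)
  also have "(\<Sum>k. C * ht k) = C * hyp2F1 (v/2) ((v+1)/2) (v+1/2) z"
    unfolding hyp2F1_def ht_def[symmetric] by (rule suminf_mult[OF hs])
  finally have step5: "(\<Sum>k. ennreal (C * ht k)) = ennreal (C * hyp2F1 (v/2) ((v+1)/2) (v+1/2) z)" .
  have "(\<integral>\<^sup>+Y. ennreal (G Y) \<partial>lborel) = ennreal (C * hyp2F1 (v/2) ((v+1)/2) (v+1/2) z)"
    using step1 step3 step4 step5 unfolding IG_def by simp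
  then show ?thesis unfolding G_def C_def K_def z_def by (simp add: mult_ac)
qed

lemma hyp_nonneg:
  fixes a b c z :: real
  assumes a: "a > 0" and b: "b > 0" and c: "c > 0" and abc: "a + b = c" and z: "0 \<le> z" "z < 1"
  shows "hyp2F1 a b c z \<ge> 0"
  unfolding hyp2F1_def
  by (rule suminf_nonneg[OF hyp_summable[OF assms]]) (use a b c z in \<open>auto intro!: mult_nonneg_nonneg divide_nonneg_nonneg pochhammer_nonneg\<close>)

lemma hyp_zero: "hyp2F1 a b c 0 = 1"
  unfolding hyp2F1_def using powser_zero[of "\<lambda>k. pochhammer a k * pochhammer b k / (pochhammer c k * fact k)"]
  by simp

lemma hyp2F1_measurable [measurable (raw)]:
  assumes [measurable]: "f \<in> borel_measurable M"
  shows "(\<lambda>x. hyp2F1 a b c (f x)) \<in> borel_measurable M"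
  unfolding hyp2F1_def by measurable

definition Phi :: "real \<Rightarrow> real \<Rightarrow> real \<Rightarrow> real \<Rightarrow> real \<times> real \<Rightarrow> ennreal" where
  "Phi v \<rho> t s q = ennreal (indicator {q. fst q ^ 2 + snd q ^ 2 < 1} q *
      ((1 - fst q ^ 2 - snd q ^ 2) powr (v - 1) * (1 + \<rho>^2 - 2 * t * fst q - 2 * s * snd q) powr (-v)))"

lemma Phi_measurable [measurable]: "Phi v \<rho> t s \<in> borel_measurable borel"
proof -
  have "Phi v \<rho> t s \<in> borel_measurable (borel \<Otimes>\<^sub>M borel)" unfolding Phi_def by measurable
  then show ?thesis by (simp add: borel_prod)
qed

lemma Phi_fiber_out:
  assumes "\<bar>x\<bar> \<ge> 1"
  shows "(\<integral>\<^sup>+Y. Phi v \<rho> t s (x, Y) \<partial>lborel) = 0"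
proof -
  have "Phi v \<rho> t s (x, Y) = 0" for Y
  proof -
    have "x^2 \<ge> 1" using assms by (metis abs_ge_self abs_le_square_iff abs_one one_power2 power2_abs)
    moreover have "0 \<le> Y^2" by simp
    ultimately have "\<not> x^2 + Y^2 < 1" by linarith
    then show ?thesis unfolding Phi_def by simp
  qed
  then show ?thesis by simp
qed

lemma Phi_fiber_in:
  fixes v \<rho> t s x :: real
  assumes v: "v > 0" and x: "\<bar>x\<bar> < 1" and s: "s \<ge> 0"
    and A: "2 * s * sqrt (1 - x^2) < 1 + \<rho>^2 - 2 * t * x"
  shows "(\<integral>\<^sup>+Y. Phi v \<rho> t s (x, Y) \<partial>lborel) =
     ennreal (Beta (1/2) v * ((1 - x^2) powr (v - 1/2) * (1 + \<rho>^2 - 2 * t * x) powr (-v) *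
        hyp2F1 (v/2) ((v+1)/2) (v+1/2) (4 * s^2 * (1 - x^2) / (1 + \<rho>^2 - 2 * t * x)^2)))"
proof -
  define r where "r = sqrt (1 - x^2)"
  define A where "A = 1 + \<rho>^2 - 2 * t * x"
  have x2: "x^2 < 1" using x by (simp add: abs_square_less_1)
  have r: "r > 0" unfolding r_def using x2 by simp
  have r2: "r^2 = 1 - x^2" unfolding r_def using x2 by simp
  have pt: "Phi v \<rho> t s (x, Y) = ennreal (indicator {-r<..<r} Y * ((r^2 - Y^2) powr (v - 1) * (A - 2 * s * Y) powr (-v)))" for Y
  proof -
    have iff: "(x^2 + Y^2 < 1) \<longleftrightarrow> Y \<in> {-r<..<r}"
    proof -
      have "(x^2 + Y^2 < 1) \<longleftrightarrow> Y^2 < r^2" using r2 by auto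
      also have "\<dots> \<longleftrightarrow> \<bar>Y\<bar> < r" using r abs_le_square_iff[of r Y] by (simp add: not_le[symmetric])
      finally show ?thesis by auto
    qed
    have e1: "1 - x^2 - Y^2 = r^2 - Y^2" using r2 by simp
    have e2: "1 + \<rho>^2 - 2 * t * x - 2 * s * Y = A - 2 * s * Y" by (simp add: A_def)
    have e3: "indicator {q. fst q ^ 2 + snd q ^ 2 < 1} (x, Y) = (indicator {-r<..<r} Y :: real)"
      using iff by (simp add: indicator_def)
    show ?thesis unfolding Phi_def fst_conv snd_conv e1 e2 e3 ..
  qed
  have "(\<integral>\<^sup>+Y. Phi v \<rho> t s (x, Y) \<partial>lborel) = (\<integral>\<^sup>+Y. ennreal (indicator {-r<..<r} Y * ((r^2 - Y^2) powr (v - 1) * (A - 2 * s * Y) powr (-v))) \<partial>lborel)"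
    by (simp add: pt)
  also have "\<dots> = ennreal (Beta (1/2) v * ((r^2) powr (v - 1/2) * A powr (-v) * hyp2F1 (v/2) ((v+1)/2) (v+1/2) (4 * s^2 * r^2/A^2)))"
    by (rule fiber) (use v r s A in \<open>auto simp: r_def A_def\<close>)
  finally show ?thesis unfolding r2 A_def .
qed

definition fL :: "nat \<Rightarrow> real \<Rightarrow> real \<Rightarrow> real \<Rightarrow> real" where
  "fL n \<rho> a x = (1 - x^2) powr ((real n - 3) / 2)
            / (1 + \<rho>^2 - 2 * \<rho> * x * cos a) powr (real n / 2 - 1)
            * hyp2F1 ((real n - 2) / 4) (real n / 4) ((real n - 1) / 2)
                (4 * \<rho>^2 * (sin a)^2 * (1 - x^2) / (1 + \<rho>^2 - 2 * \<rho> * x * cos a)^2)"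

lemma fL_alt:
  assumes vdef: "v = real n / 2 - 1"
  shows "fL n \<rho> a x = (1 - x^2) powr (v - 1/2) * (1 + \<rho>^2 - 2 * (\<rho> * cos a) * x) powr (-v) *
        hyp2F1 (v/2) ((v+1)/2) (v+1/2)
          (4 * (\<rho> * sin a)^2 * (1 - x^2) / (1 + \<rho>^2 - 2 * (\<rho> * cos a) * x)^2)"
proof -
  have 1: "(real n - 3) / 2 = v - 1/2" using vdef by simp
  have 2: "(real n - 2) / 4 = v/2" "real n / 4 = (v+1)/2" "(real n - 1) / 2 = v+1/2" "real n / 2 - 1 = v"
    using vdef by simp_all
  have 3: "1 + \<rho>^2 - 2 * \<rho> * x * cos a = 1 + \<rho>^2 - 2 * (\<rho> * cos a) * x" by (simp add: mult_ac)
  have 4: "4 * \<rho>^2 * (sin a)^2 * (1 - x^2) = 4 * (\<rho> * sin a)^2 * (1 - x^2)" by (simp add: power_mult_distrib)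
  have 5: "P / Q powr v * H = P * Q powr (-v) * H" for P Q H :: real
    by (simp only: powr_minus divide_inverse)
  show ?thesis unfolding fL_def 1 2 3 4 5 ..
qed

lemma gap:
  fixes \<rho> a x :: real
  assumes \<rho>: "0 \<le> \<rho>" "\<rho> \<le> 1" and x: "\<bar>x\<bar> < 1" and ex: "\<not> (\<rho> = 1 \<and> x = cos a)"
  shows "2 * (\<rho> * sin a) * sqrt (1 - x^2) < 1 + \<rho>^2 - 2 * (\<rho> * cos a) * x"
proof -
  define r where "r = sqrt (1 - x^2)"
  have r2: "r^2 = 1 - x^2" unfolding r_def using x by (simp add: abs_square_less_1 less_imp_le)
  have cs: "(cos a)^2 + (sin a)^2 = 1" by simp
  have id: "1 + \<rho>^2 - 2 * (\<rho> * cos a) * x - 2 * (\<rho> * sin a) * r = (1 - \<rho>)^2 + \<rho> * ((x - cos a)^2 + (r - sin a)^2)"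
  proof -
    have "(x - cos a)^2 + (r - sin a)^2 = (x^2 + r^2) + ((cos a)^2 + (sin a)^2) - 2 * (x * cos a + r * sin a)"
      by (simp add: power2_diff algebra_simps)
    also have "\<dots> = 2 - 2 * (x * cos a + r * sin a)" unfolding r2 cs by simp
    finally have "(x - cos a)^2 + (r - sin a)^2 = 2 - 2 * (x * cos a + r * sin a)" .
    then show ?thesis by (simp add: power2_diff algebra_simps)
  qed
  have pos: "(1 - \<rho>)^2 + \<rho> * ((x - cos a)^2 + (r - sin a)^2) > 0"
  proof (cases "\<rho> = 1")
    case True
    then have "x \<noteq> cos a" using ex by auto
    then have "(x - cos a)^2 > 0" by simp
    then show ?thesis using True by (simp add: add_pos_nonneg)
  next
    case False
    then have "(1 - \<rho>)^2 > 0" using \<rho> by simp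
    moreover have "\<rho> * ((x - cos a)^2 + (r - sin a)^2) \<ge> 0" using \<rho> by simp
    ultimately show ?thesis by linarith
  qed
  show ?thesis using id pos unfolding r_def by linarith
qed

lemma fiber_fL:
  fixes \<rho> a x :: real
  assumes n: "n \<ge> 3" and \<rho>: "0 \<le> \<rho>" "\<rho> \<le> 1" and a: "0 \<le> a" "a \<le> pi/2" and x: "\<bar>x\<bar> < 1" and ex: "\<not> (\<rho> = 1 \<and> x = cos a)"
  shows "(\<integral>\<^sup>+Y. Phi (real n / 2 - 1) \<rho> (\<rho> * cos a) (\<rho> * sin a) (x, Y) \<partial>lborel) = ennreal (Beta (1/2) (real n / 2 - 1) * fL n \<rho> a x)"
    and "fL n \<rho> a x \<ge> 0"
proof -
  define v where "v = real n / 2 - 1"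
  have v: "v > 0" unfolding v_def using n by simp
  have x2: "x^2 < 1" using x by (simp add: abs_square_less_1)
  have sa: "sin a \<ge> 0" using a by (intro sin_ge_zero) auto
  have s: "\<rho> * sin a \<ge> 0" using sa \<rho> by simp
  have A: "2 * (\<rho> * sin a) * sqrt (1 - x^2) < 1 + \<rho>^2 - 2 * (\<rho> * cos a) * x" by (rule gap) (use \<rho> x ex in auto)
  have "0 \<le> sqrt (1 - x^2)" using x2 by simp
  then have sq0: "0 \<le> 2 * (\<rho> * sin a) * sqrt (1 - x^2)" using s by simp
  have Apos: "1 + \<rho>^2 - 2 * (\<rho> * cos a) * x > 0"
    using sq0 A by linarith
  have "(\<integral>\<^sup>+Y. Phi v \<rho> (\<rho> * cos a) (\<rho> * sin a) (x, Y) \<partial>lborel) =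
     ennreal (Beta (1/2) v * ((1 - x^2) powr (v - 1/2) * (1 + \<rho>^2 - 2 * (\<rho> * cos a) * x) powr (-v) *
        hyp2F1 (v/2) ((v+1)/2) (v+1/2) (4 * (\<rho> * sin a)^2 * (1 - x^2) / (1 + \<rho>^2 - 2 * (\<rho> * cos a) * x)^2)))"
    by (rule Phi_fiber_in[OF v x s A])
  also have "\<dots> = ennreal (Beta (1/2) v * fL n \<rho> a x)"
    unfolding fL_alt[OF v_def] by (simp only: mult.assoc)
  finally show "(\<integral>\<^sup>+Y. Phi (real n / 2 - 1) \<rho> (\<rho> * cos a) (\<rho> * sin a) (x, Y) \<partial>lborel) = ennreal (Beta (1/2) (real n / 2 - 1) * fL n \<rho> a x)"
    unfolding v_def .
  have z: "0 \<le> 4 * (\<rho> * sin a)^2 * (1 - x^2) / (1 + \<rho>^2 - 2 * (\<rho> * cos a) * x)^2"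
    using x2 by simp
  have z1: "4 * (\<rho> * sin a)^2 * (1 - x^2) / (1 + \<rho>^2 - 2 * (\<rho> * cos a) * x)^2 < 1"
  proof -
    have "4 * (\<rho> * sin a)^2 * (1 - x^2) = (2 * (\<rho> * sin a) * sqrt (1 - x^2))^2"
      using x2 by (simp add: power_mult_distrib)
    also have "\<dots> < (1 + \<rho>^2 - 2 * (\<rho> * cos a) * x)^2"
      using A sq0 by (intro power_strict_mono) auto
    finally show ?thesis using Apos by simp
  qed
  show "fL n \<rho> a x \<ge> 0"
    unfolding fL_alt[OF v_def]
    by (intro mult_nonneg_nonneg hyp_nonneg) (use v z z1 in \<open>auto simp: field_simps\<close>)
qed

lemma total:
  fixes \<rho> a :: real
  assumes n: "n \<ge> 3" and \<rho>: "0 \<le> \<rho>" "\<rho> \<le> 1" and a: "0 \<le> a" "a \<le> pi/2"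
  shows "(\<integral>\<^sup>+q. Phi (real n / 2 - 1) \<rho> (\<rho> * cos a) (\<rho> * sin a) q \<partial>lborel) =
         ennreal (Beta (1/2) (real n / 2 - 1)) * (\<integral>\<^sup>+x. ennreal (indicator {-1..1} x * fL n \<rho> a x) \<partial>lborel)"
proof -
  define P where "P = Phi (real n / 2 - 1) \<rho> (\<rho> * cos a) (\<rho> * sin a)"
  define K where "K = Beta (1/2) (real n / 2 - 1)"
  have K: "K > 0" unfolding K_def Beta_def using n by (auto intro!: divide_pos_pos mult_pos_pos Gamma_real_pos)
  have [measurable]: "P \<in> borel_measurable borel" unfolding P_def by measurable
  have "(\<integral>\<^sup>+q. P q \<partial>lborel) = (\<integral>\<^sup>+q. P q \<partial>(lborel \<Otimes>\<^sub>M lborel))" by (simp add: lborel_prod)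
  also have "\<dots> = (\<integral>\<^sup>+x. \<integral>\<^sup>+Y. P (x, Y) \<partial>lborel \<partial>lborel)"
    by (rule lborel.nn_integral_fst[symmetric]) (simp add: lborel_prod measurable_lborel1)
  also have "\<dots> = (\<integral>\<^sup>+x. ennreal K * ennreal (indicator {-1..1} x * fL n \<rho> a x) \<partial>lborel)"
  proof (rule nn_integral_cong_AE)
    have "AE x in lborel. x \<noteq> -1 \<and> x \<noteq> 1 \<and> x \<noteq> cos a"
      using AE_lborel_singleton[of "-1"] AE_lborel_singleton[of 1] AE_lborel_singleton[of "cos a"]
      by eventually_elim auto
    then show "AE x in lborel. (\<integral>\<^sup>+Y. P (x, Y) \<partial>lborel) = ennreal K * ennreal (indicator {-1..1} x * fL n \<rho> a x)"
    proof eventually_elim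
      case (elim x)
      show ?case
      proof (cases "\<bar>x\<bar> < 1")
        case True
        have ex: "\<not> (\<rho> = 1 \<and> x = cos a)" using elim by auto
        have "x \<in> {-1..1}" using True by auto
        then show ?thesis
          using fiber_fL[OF n \<rho> a True ex] K unfolding P_def K_def by (simp add: ennreal_mult')
      next
        case False
        then have "x \<notin> {-1..1}" using elim by auto
        then show ?thesis using Phi_fiber_out[of x] False unfolding P_def by simp
      qed
    qed
  qed
  also have "\<dots> = ennreal K * (\<integral>\<^sup>+x. ennreal (indicator {-1..1} x * fL n \<rho> a x) \<partial>lborel)"
    by (rule nn_integral_cmult) (unfold fL_def, measurable)
  finally show ?thesis unfolding P_def K_def .
qed

lemma rot:
  fixes \<rho> a v :: real
  assumes a: "0 \<le> a" "a \<le> pi/2"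
  shows "(\<integral>\<^sup>+q. Phi v \<rho> (\<rho> * cos a) (\<rho> * sin a) q \<partial>lborel) = (\<integral>\<^sup>+q. Phi v \<rho> \<rho> 0 q \<partial>lborel)"
proof -
  have c: "cos a > -1" using a cos_ge_zero[of a] by auto
  have cs: "(cos a)^2 + (- sin a)^2 = 1" by simp
  have pt: "Phi v \<rho> \<rho> 0 (cos a * fst z - (- sin a) * snd z, (- sin a) * fst z + cos a * snd z) = Phi v \<rho> (\<rho> * cos a) (\<rho> * sin a) z" for z
  proof -
    obtain z1 z2 where z: "z = (z1, z2)" by (cases z)
    have e1: "(cos a * z1 - (- sin a) * z2)^2 + ((- sin a) * z1 + cos a * z2)^2 = z1^2 + z2^2"
      using sin_cos_squared_add[of a] by algebra
    have e2: "1 + \<rho>^2 - 2 * \<rho> * (cos a * z1 - (- sin a) * z2) - 2 * 0 * ((- sin a) * z1 + cos a * z2)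
             = 1 + \<rho>^2 - 2 * (\<rho> * cos a) * z1 - 2 * (\<rho> * sin a) * z2"
      by (simp add: algebra_simps)
    have e3: "1 - (cos a * z1 - (- sin a) * z2)^2 - ((- sin a) * z1 + cos a * z2)^2 = 1 - z1^2 - z2^2"
      using e1 by simp
    have e4: "indicator {q. fst q ^ 2 + snd q ^ 2 < 1} (cos a * z1 - (- sin a) * z2, (- sin a) * z1 + cos a * z2) = (indicator {q. fst q ^ 2 + snd q ^ 2 < 1} (z1, z2) :: real)"
      unfolding indicator_def using e1 by simp
    show ?thesis unfolding z fst_conv snd_conv unfolding Phi_def e4 unfolding fst_conv snd_conv e2 e3 ..
  qed
  have "(\<integral>\<^sup>+q. Phi v \<rho> \<rho> 0 q \<partial>lborel) = (\<integral>\<^sup>+z. Phi v \<rho> \<rho> 0 (cos a * fst z - (- sin a) * snd z, (- sin a) * fst z + cos a * snd z) \<partial>lborel)"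
    by (rule rotation_inv[symmetric, OF _ cs c]) measurable
  then show ?thesis unfolding pt by simp
qed

lemma fL_zero:
  "fL n \<rho> 0 x = (1 - x^2) powr ((real n - 3) / 2) * (1 - 2 * \<rho> * x + \<rho>^2) powr (1 - real n / 2)"
proof -
  have 1: "1 + \<rho>^2 - 2 * \<rho> * x * cos 0 = 1 - 2 * \<rho> * x + \<rho>^2" by simp
  have 2: "4 * \<rho>^2 * (sin 0)^2 * (1 - x^2) / (1 - 2 * \<rho> * x + \<rho>^2)^2 = 0" by simp
  have 3: "1 - real n / 2 = - (real n / 2 - 1)" by simp
  show ?thesis unfolding fL_def 1 2 3 hyp_zero by (simp only: powr_minus divide_inverse mult_1_right)
qed

lemma g_bound:
  fixes \<rho> x :: real
  assumes n: "n \<ge> 3" and x: "\<bar>x\<bar> < 1"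
  shows "(1 - x^2) powr ((real n - 3) / 2) * (1 - 2 * \<rho> * x + \<rho>^2) powr (1 - real n / 2) \<le> (1 - x^2) powr (-1/2)"
proof -
  have x2: "0 < 1 - x^2" using x by (simp add: abs_square_less_1)
  have le: "1 - x^2 \<le> 1 - 2 * \<rho> * x + \<rho>^2"
  proof -
    have "0 \<le> (\<rho> - x)^2" by simp
    then show ?thesis by (simp add: power2_diff algebra_simps)
  qed
  have "(1 - 2 * \<rho> * x + \<rho>^2) powr (1 - real n / 2) \<le> (1 - x^2) powr (1 - real n / 2)"
    by (rule powr_mono2') (use n x2 le in auto)
  then have "(1 - x^2) powr ((real n - 3) / 2) * (1 - 2 * \<rho> * x + \<rho>^2) powr (1 - real n / 2)
      \<le> (1 - x^2) powr ((real n - 3) / 2) * (1 - x^2) powr (1 - real n / 2)"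
    by (intro mult_left_mono) auto
  also have "\<dots> = (1 - x^2) powr ((real n - 3) / 2 + (1 - real n / 2))"
    by (simp add: powr_add)
  also have "(real n - 3) / 2 + (1 - real n / 2) = - 1/2" by (simp add: field_simps)
  finally show ?thesis by simp
qed

theorem lemma3:
  fixes n :: nat and \<rho> \<alpha> :: real
  assumes "n \<ge> 3" and "0 \<le> \<rho>" and "\<rho> \<le> 1" and "0 \<le> \<alpha>" and "\<alpha> \<le> pi / 2"
  shows "integral {-1..1} (\<lambda>x::real.
            (1 - x^2) powr ((real n - 3) / 2)
            / (1 + \<rho>^2 - 2 * \<rho> * x * cos \<alpha>) powr (real n / 2 - 1)
            * hyp2F1 ((real n - 2) / 4) (real n / 4) ((real n - 1) / 2)
                (4 * \<rho>^2 * (sin \<alpha>)^2 * (1 - x^2) / (1 + \<rho>^2 - 2 * \<rho> * x * cos \<alpha>)^2))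
       = integral {-1..1} (\<lambda>x::real.
            (1 - x^2) powr ((real n - 3) / 2) * (1 - 2 * \<rho> * x + \<rho>^2) powr (1 - real n / 2))"
proof -
  note n = assms(1) and \<rho> = assms(2,3) and a = assms(4,5)
  define v where "v = real n / 2 - 1"
  define K where "K = Beta (1/2) v"
  have K: "K > 0" unfolding K_def Beta_def v_def using n by (auto intro!: divide_pos_pos mult_pos_pos Gamma_real_pos)
  define L where "L a = (\<integral>\<^sup>+x. ennreal (indicator {-1..1} x * fL n \<rho> a x) \<partial>lborel)" for a
  define g where "g x = (1 - x^2) powr ((real n - 3) / 2) * (1 - 2 * \<rho> * x + \<rho>^2) powr (1 - real n / 2)" for x
  have "ennreal K * L \<alpha> = (\<integral>\<^sup>+q. Phi v \<rho> (\<rho> * cos \<alpha>) (\<rho> * sin \<alpha>) q \<partial>lborel)"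
    using total[OF n \<rho> a] unfolding L_def K_def v_def by simp
  also have "\<dots> = (\<integral>\<^sup>+q. Phi v \<rho> \<rho> 0 q \<partial>lborel)" by (rule rot[OF a])
  also have "\<dots> = (\<integral>\<^sup>+q. Phi v \<rho> (\<rho> * cos 0) (\<rho> * sin 0) q \<partial>lborel)" by simp
  also have "\<dots> = ennreal K * L 0"
    using total[OF n \<rho>, of 0] unfolding L_def K_def v_def by simp
  finally have "ennreal K * L \<alpha> = ennreal K * L 0" .
  then have LL: "L \<alpha> = L 0" using K by (simp add: ennreal_mult_cancel_left)
  have L0: "L 0 = (\<integral>\<^sup>+x. ennreal (indicator {-1..1} x * g x) \<partial>lborel)"
    unfolding L_def g_def fL_zero ..
  have g_nn: "g x \<ge> 0" for x unfolding g_def by simp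
  have [measurable]: "g \<in> borel_measurable borel" unfolding g_def by measurable
  have fin: "L 0 < top"
  proof -
    have "(\<integral>\<^sup>+x. ennreal (indicator {-1..1} x * g x) \<partial>lborel) \<le>
          (\<integral>\<^sup>+x. ennreal (indicator {-1<..<1} x * ((1 - x^2) powr (-1/2) * x^(2*0))) \<partial>lborel)"
    proof (rule nn_integral_mono_AE)
      show "AE x in lborel. ennreal (indicator {-1..1} x * g x) \<le> ennreal (indicator {-1<..<1} x * ((1 - x^2) powr (-1/2) * x^(2*0)))"
        using AE_lborel_singleton[of "-1"] AE_lborel_singleton[of 1]
      proof eventually_elim
        case (elim x)
        show ?case
        proof (cases "\<bar>x\<bar> < 1")
          case True
          then have "x \<in> {-1..1}" "x \<in> {-1<..<1}" by auto
          then show ?thesis using g_bound[OF n True, of \<rho>] unfolding g_def by (simp add: ennreal_leI)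
        next
          case False
          then have "x \<notin> {-1..1}" using elim by auto
          then show ?thesis by simp
        qed
      qed
    qed
    also have "\<dots> = ennreal (Beta (real 0 + 1/2) (-1/2 + 1))" by (rule beta_J) simp
    finally show ?thesis unfolding L0 by (simp add: top.not_eq_extremum le_less_trans)
  qed
  obtain V where V: "L 0 = ennreal V" "V \<ge> 0" using fin by (cases "L 0") auto
  have rhs: "(g has_integral V) {-1..1}"
  proof -
    have "((\<lambda>x. indicator {-1..1} x * g x) has_integral V) UNIV"
      by (rule nn_integral_has_integral) (use V L0 g_nn in auto)
    moreover have "(\<lambda>x. indicator {-1..1} x * g x) = (\<lambda>x. if x \<in> {-1..1} then g x else 0)"
      by (auto simp: indicator_def)
    ultimately show ?thesis using has_integral_restrict_UNIV by metis
  qed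
  define P where "P = Phi v \<rho> (\<rho> * cos \<alpha>) (\<rho> * sin \<alpha>)"
  have [measurable]: "P \<in> borel_measurable (lborel \<Otimes>\<^sub>M lborel)"
    unfolding P_def by (simp add: lborel_prod measurable_lborel1)
  define f' where "f' x = enn2real (\<integral>\<^sup>+Y. P (x, Y) \<partial>lborel) / K" for x
  have f'_meas: "f' \<in> borel_measurable borel"
  proof -
    have "(\<lambda>x. \<integral>\<^sup>+Y. P (x, Y) \<partial>lborel) \<in> borel_measurable lborel"
      by (rule lborel.borel_measurable_nn_integral_fst) measurable
    then show ?thesis unfolding f'_def measurable_lborel1 by measurable
  qed
  have f'_nn: "f' x \<ge> 0" for x unfolding f'_def using K by simp
  have f'_eq: "f' x = indicator {-1..1} x * fL n \<rho> \<alpha> x" if "x \<noteq> -1" "x \<noteq> 1" "x \<noteq> cos \<alpha>" for x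
  proof (cases "\<bar>x\<bar> < 1")
    case True
    have ex: "\<not> (\<rho> = 1 \<and> x = cos \<alpha>)" using that by auto
    have "x \<in> {-1..1}" using True by auto
    then show ?thesis
      using fiber_fL[OF n \<rho> a True ex] K unfolding f'_def P_def v_def K_def by simp
  next
    case False
    then have "x \<notin> {-1..1}" using that by auto
    then show ?thesis using Phi_fiber_out[of x] False unfolding f'_def P_def by simp
  qed
  have "(\<integral>\<^sup>+x. ennreal (f' x) \<partial>lborel) = L \<alpha>"
    unfolding L_def
  proof (rule nn_integral_cong_AE)
    show "AE x in lborel. ennreal (f' x) = ennreal (indicator {-1..1} x * fL n \<rho> \<alpha> x)"
      using AE_lborel_singleton[of "-1"] AE_lborel_singleton[of 1] AE_lborel_singleton[of "cos \<alpha>"]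
      by eventually_elim (simp add: f'_eq)
  qed
  then have "(\<integral>\<^sup>+x. ennreal (f' x) \<partial>lborel) = ennreal V" using LL V by simp
  then have "(f' has_integral V) UNIV"
    by (intro nn_integral_has_integral f'_meas f'_nn V(2))
  moreover have "(\<lambda>x. if x \<in> {-1..1} then f' x else 0) = f'"
  proof
    fix x
    show "(if x \<in> {-1..1} then f' x else 0) = f' x"
    proof (cases "x \<in> {-1..1}")
      case False
      then have "\<bar>x\<bar> \<ge> 1" by auto
      then show ?thesis using Phi_fiber_out[of x] False unfolding f'_def P_def by simp
    qed simp
  qed
  ultimately have "(f' has_integral V) {-1..1}" using has_integral_restrict_UNIV by metis
  then have lhs: "(fL n \<rho> \<alpha> has_integral V) {-1..1}"
  proof (rule has_integral_spike[rotated 2])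
    show "negligible {-1, 1, cos \<alpha>}" by auto
    show "fL n \<rho> \<alpha> x = f' x" if "x \<in> {-1..1} - {-1, 1, cos \<alpha>}" for x
      using f'_eq[of x] that by simp
  qed
  have "integral {-1..1} (fL n \<rho> \<alpha>) = V" using lhs by (rule integral_unique)
  moreover have "integral {-1..1} g = V" using rhs by (rule integral_unique)
  ultimately show ?thesis unfolding fL_def[abs_def] g_def[abs_def] by simp
qed

end
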